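(* Assume the standing hypotheses in the context. Let $x(t)$ be any solution of $x'=A(t)x+f(t,x)$. Then the system $$Z'(t)=A(t)Z(t)+f(t,x(t)+Z(t))-f(t,x(t))$$ has a unique solution bounded on $\mathbb{R}$, namely $Z\equiv0$.
   Context: Standing hypotheses: $A:\mathbb{R}\to\mathbb{R}^{n\times n}$ is continuous and bounded, $T(t,s)$ is the evolution operator of $x'=A(t)x$. $\mu:\mathbb{R}\to(0,\infty)$ is an increasing differentiable growth rate: $\mu(0)=1$, $\lim_{t\to-\infty}\mu(t)=0$, $\lim_{t\to+\infty}\mu(t)=+\infty$. The system $x'=A(t)x$ admits an algebraic dichotomy: projections $P(s)$, $Q(s)=I-P(s)$, constants $K,\alpha>0$ with $T(t,s)P(s)=P(t)T(t,s)$, $\|T(t,s)P(s)\|\le K(\mu(t)/\mu(s))^{-\alpha}$ ($t\ge s$), $\|T(t,s)Q(s)\|\le K(\mu(s)/\mu(t))^{-\alpha}$ ($t\le s$). $f:\mathbb{R}\times\mathbb{R}^n\to\mathbb{R}^n$ is continuous, $\|f(t,x)\|\le\beta\mu'(t)\mu^{-1}(t)$, $\|f(t,x_1)-f(t,x_2)\|\le\gamma\mu'(t)\mu^{-1}(t)\|x_1-x_2\|$ for constants $\beta,\gamma\ge0$, and $6K\gamma\alpha^{-1}<1$. *)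

theory Defs
  imports "HOL-Analysis.Analysis"
begin

end

theory Submission
  imports Defs "HOL-Analysis.Analysis"
begin

lemma bl_mv_left: "bounded_linear (\<lambda>M::real^'n^'m. M *v v)"
proof -
  have "linear (\<lambda>M::real^'n^'m. M *v v)"
    by (rule linearI) (auto simp: vec_eq_iff matrix_vector_mult_def sum.distrib sum_distrib_left algebra_simps)
  then show ?thesis by (simp add: linear_conv_bounded_linear)
qed

lemma mv_bound:
  fixes M :: "real^'n^'m"
  assumes "norm M \<le> B"
  shows "norm (M *v x) \<le> (real CARD('m) * real CARD('n) * B) * norm x"
proof -
  have "\<bar>M $ i $ j\<bar> \<le> B" for i j
    using component_le_norm_cart[of "M $ i" j] Finite_Cartesian_Product.norm_nth_le[of M i] assms by simp
  then have "onorm ((*v) M) \<le> real CARD('m) * real CARD('n) * B"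
    by (rule onorm_le_matrix_component)
  moreover have "norm (M *v x) \<le> onorm ((*v) M) * norm x"
    using onorm [OF matrix_vector_mul_bounded_linear] by blast
  ultimately show ?thesis by (meson mult_right_mono norm_ge_zero order_trans)
qed

lemma gronwall_sq:
  fixes y :: "real \<Rightarrow> real^'n"
  assumes L: "\<And>t v. norm (A t *v v) \<le> L * norm v" and L0: "L \<ge> 0"
    and y: "\<And>t. (y has_vector_derivative A t *v y t) (at t)"
  shows "norm (y a) ^ 2 \<le> exp (2 * L * \<bar>a - b\<bar>) * norm (y b) ^ 2"
proof -
  define \<phi> where "\<phi> t = y t \<bullet> y t" for t
  have dphi: "(\<phi> has_real_derivative 2 * (y t \<bullet> (A t *v y t))) (at t)" for t
  proof -
    have "(\<phi> has_vector_derivative (y t \<bullet> (A t *v y t) + (A t *v y t) \<bullet> y t)) (at t)"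
      unfolding \<phi>_def by (rule bounded_bilinear.has_vector_derivative[OF bounded_bilinear_inner y y])
    then show ?thesis
      by (simp add: has_real_derivative_iff_has_vector_derivative inner_commute)
  qed
  have bd: "\<bar>2 * (y t \<bullet> (A t *v y t))\<bar> \<le> 2 * L * \<phi> t" for t
  proof -
    have "\<bar>y t \<bullet> (A t *v y t)\<bar> \<le> norm (y t) * norm (A t *v y t)" by (rule Cauchy_Schwarz_ineq2)
    also have "\<dots> \<le> norm (y t) * (L * norm (y t))" by (simp add: L mult_left_mono)
    also have "\<dots> = L * \<phi> t" by (simp add: \<phi>_def dot_square_norm power2_eq_square)
    finally show ?thesis by simp
  qed
  have phin: "\<phi> t = norm (y t) ^ 2" for t by (simp add: \<phi>_def dot_square_norm)
  show ?thesis
  proof (cases "b \<le> a")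
    case True
    define h where "h t = exp (- 2 * L * t) * \<phi> t" for t
    have "h a \<le> h b"
    proof (rule DERIV_nonpos_imp_nonincreasing[OF True])
      fix x
      have e: "((\<lambda>t. exp (- 2 * L * t)) has_real_derivative exp (- 2 * L * x) * (- 2 * L)) (at x)"
        by (auto intro!: derivative_eq_intros)
      have "(h has_real_derivative exp (- 2 * L * x) * (- 2 * L) * \<phi> x + (2 * (y x \<bullet> (A x *v y x))) * exp (- 2 * L * x)) (at x)"
        unfolding h_def by (rule DERIV_mult[OF e dphi])
      moreover have "exp (- 2 * L * x) * (- 2 * L) * \<phi> x + (2 * (y x \<bullet> (A x *v y x))) * exp (- 2 * L * x) \<le> 0"
      proof -
        have "2 * (y x \<bullet> (A x *v y x)) \<le> 2 * L * \<phi> x" using bd[of x] by linarith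
        then have "exp (- 2 * L * x) * (2 * (y x \<bullet> (A x *v y x))) \<le> exp (- 2 * L * x) * (2 * L * \<phi> x)"
          by (rule mult_left_mono) auto
        moreover have "exp (- 2 * L * x) * (- 2 * L) * \<phi> x = - (exp (- 2 * L * x) * (2 * L * \<phi> x))" by simp
        moreover have "(2 * (y x \<bullet> (A x *v y x))) * exp (- 2 * L * x) = exp (- 2 * L * x) * (2 * (y x \<bullet> (A x *v y x)))" by (rule mult.commute)
        ultimately show ?thesis by linarith
      qed
      ultimately show "\<exists>d. (h has_real_derivative d) (at x) \<and> d \<le> 0" by blast
    qed
    then have "exp (2 * L * a) * h a \<le> exp (2 * L * a) * h b" by (rule mult_left_mono) auto
    moreover have "exp (2 * L * a) * h a = \<phi> a"
      unfolding h_def by (simp add: mult.assoc[symmetric] exp_add[symmetric])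
    moreover have "exp (2 * L * a) * h b = exp (2 * L * (a - b)) * \<phi> b"
    proof -
      have "exp (2 * L * a) * exp (- 2 * L * b) = exp (2 * L * (a - b))"
        by (simp add: exp_add[symmetric] right_diff_distrib)
      then show ?thesis unfolding h_def by (simp only: mult.assoc[symmetric])
    qed
    ultimately have "\<phi> a \<le> exp (2 * L * (a - b)) * \<phi> b" by linarith
    then show ?thesis using True by (simp add: phin)
  next
    case False
    define h where "h t = exp (2 * L * t) * \<phi> t" for t
    have "h a \<le> h b"
    proof (rule DERIV_nonneg_imp_nondecreasing[of a b h])
      show "a \<le> b" using False by simp
      fix x
      have e: "((\<lambda>t. exp (2 * L * t)) has_real_derivative exp (2 * L * x) * (2 * L)) (at x)"
        by (auto intro!: derivative_eq_intros)
      have "(h has_real_derivative exp (2 * L * x) * (2 * L) * \<phi> x + (2 * (y x \<bullet> (A x *v y x))) * exp (2 * L * x)) (at x)"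
        unfolding h_def by (rule DERIV_mult[OF e dphi])
      moreover have "exp (2 * L * x) * (2 * L) * \<phi> x + (2 * (y x \<bullet> (A x *v y x))) * exp (2 * L * x) \<ge> 0"
      proof -
        have "- (2 * L * \<phi> x) \<le> 2 * (y x \<bullet> (A x *v y x))" using bd[of x] by linarith
        then have "exp (2 * L * x) * (- (2 * L * \<phi> x)) \<le> exp (2 * L * x) * (2 * (y x \<bullet> (A x *v y x)))"
          by (rule mult_left_mono) auto
        moreover have "exp (2 * L * x) * (2 * L) * \<phi> x =  (exp (2 * L * x) * (2 * L * \<phi> x))" by simp
        moreover have "(2 * (y x \<bullet> (A x *v y x))) * exp (2 * L * x) = exp (2 * L * x) * (2 * (y x \<bullet> (A x *v y x)))" by (rule mult.commute)
        ultimately show ?thesis by linarith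
      qed
      ultimately show "\<exists>d. (h has_real_derivative d) (at x) \<and> d \<ge> 0" by blast
    qed
    then have "exp (- 2 * L * a) * h a \<le> exp (- 2 * L * a) * h b" by (rule mult_left_mono) auto
    moreover have "exp (- 2 * L * a) * h a = \<phi> a"
      unfolding h_def by (simp add: mult.assoc[symmetric] exp_add[symmetric])
    moreover have "exp (- 2 * L * a) * h b = exp (2 * L * (b - a)) * \<phi> b"
    proof -
      have "exp (- 2 * L * a) * exp (2 * L * b) = exp (2 * L * (b - a))"
        by (simp add: exp_add[symmetric] right_diff_distrib)
      then show ?thesis unfolding h_def by (simp only: mult.assoc[symmetric])
    qed
    ultimately have "\<phi> a \<le> exp (2 * L * (b - a)) * \<phi> b" by linarith
    then show ?thesis using False by (simp add: phin)
  qed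
qed


lemma gronwall:
  fixes y :: "real \<Rightarrow> real^'n"
  assumes L: "\<And>t v. norm (A t *v v) \<le> L * norm v" and L0: "L \<ge> 0"
    and y: "\<And>t. (y has_vector_derivative A t *v y t) (at t)"
  shows "norm (y a) \<le> exp (L * \<bar>a - b\<bar>) * norm (y b)"
proof -
  have "norm (y a) ^ 2 \<le> exp (2 * L * \<bar>a - b\<bar>) * norm (y b) ^ 2"
    by (rule gronwall_sq[OF L L0 y])
  also have "\<dots> = (exp (L * \<bar>a - b\<bar>) * norm (y b)) ^ 2"
    by (simp add: power_mult_distrib power2_eq_square exp_add[symmetric])
  finally show ?thesis
    by (rule power2_le_imp_le) simp
qed

lemma mono_deriv_nonneg:
  fixes f :: "real \<Rightarrow> real"
  assumes "mono f" "(f has_real_derivative d) (at x)"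
  shows "d \<ge> 0"
proof (rule ccontr)
  assume "\<not> d \<ge> 0"
  then have "d < 0" by simp
  from DERIV_neg_dec_right[OF assms(2) this] obtain e where e: "e > 0" "\<forall>h > 0. h < e \<longrightarrow> f x > f (x + h)"
    by blast
  have "f x \<le> f (x + e / 2)" using e(1) by (intro monoD[OF assms(1)]) simp
  moreover have "f (x + e / 2) < f x" using e(2)[rule_format, of "e / 2"] e(1) by simp
  ultimately show False by simp
qed

lemma eq_aux:
  fixes M N :: "real^'n^'n"
  shows "(M *v a - N *v 0 - h *\<^sub>R (N *v b)) /\<^sub>R n = M *v ((a - 0 - h *\<^sub>R b) /\<^sub>R n) + (h / n) *\<^sub>R (M *v b - N *v b)"
  by (simp add: matrix_vector_mult_diff_distrib matrix_vector_mult_scaleR scaleR_diff_right divide_inverse_commute)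

locale linsys =
  fixes A :: "real \<Rightarrow> real^'n^'n" and T :: "real \<Rightarrow> real \<Rightarrow> real^'n^'n" and L :: real
  assumes L: "\<And>t v. norm (A t *v v) \<le> L * norm v" and L0: "L \<ge> 0"
    and T_init: "\<And>s. T s s = mat 1"
    and T_deriv: "\<And>t s. ((\<lambda>t. T t s) has_vector_derivative (A t ** T t s)) (at t)"
begin

lemma Tv_deriv: "((\<lambda>t. T t s *v v) has_vector_derivative A t *v (T t s *v v)) (at t)"
  using bounded_linear.has_vector_derivative[OF bl_mv_left[of v] T_deriv[of s t]]
  by (simp add: matrix_vector_mul_assoc)

lemma uniq:
  assumes y: "\<And>t. (y has_vector_derivative A t *v y t) (at t)" and "y s = 0"
  shows "y t = 0"
  using gronwall[OF L L0 y, of t s] assms(2) by simp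

lemma cocycle: "T t s ** T s r = T t r"
proof -
  have "(T t s ** T s r) *v v = T t r *v v" for v
  proof -
    define y where "y \<tau> = T \<tau> s *v (T s r *v v) - T \<tau> r *v v" for \<tau>
    have "(y has_vector_derivative A \<tau> *v y \<tau>) (at \<tau>)" for \<tau>
      unfolding y_def using has_vector_derivative_diff[OF Tv_deriv Tv_deriv]
      by (simp add: matrix_vector_mult_diff_distrib)
    moreover have "y s = 0" by (simp add: y_def T_init)
    ultimately have "y t = 0" by (rule uniq)
    then show ?thesis by (simp add: y_def matrix_vector_mul_assoc)
  qed
  then show ?thesis by (simp add: matrix_eq)
qed

lemma Tbound: "norm (T a b *v v) \<le> exp (L * \<bar>a - b\<bar>) * norm v"
  using gronwall[OF L L0 Tv_deriv[where s=b and v=v], where a=a and b=b] by (simp add: T_init)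

lemma Tcont2: "((\<lambda>\<rho>. T t \<rho> *v q) \<longlongrightarrow> T t r *v q) (at r)"
proof -
  have c: "((\<lambda>\<rho>. T \<rho> r *v q) \<longlongrightarrow> q) (at r)"
    using has_vector_derivative_continuous[OF Tv_deriv[where s=r and v=q and t=r]]
    by (simp add: continuous_at T_init)
  have "((\<lambda>\<rho>. T t \<rho> *v q - T t r *v q) \<longlongrightarrow> 0) (at r)"
  proof (rule Lim_null_comparison)
    show "\<forall>\<^sub>F \<rho> in at r. norm (T t \<rho> *v q - T t r *v q) \<le> exp (L * \<bar>t - \<rho>\<bar>) * norm (q - T \<rho> r *v q)"
    proof (rule always_eventually, rule allI)
      fix \<rho>
      have "T t \<rho> *v q - T t r *v q = T t \<rho> *v (q - T \<rho> r *v q)"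
        by (simp add: matrix_vector_mult_diff_distrib matrix_vector_mul_assoc cocycle)
      then show "norm (T t \<rho> *v q - T t r *v q) \<le> exp (L * \<bar>t - \<rho>\<bar>) * norm (q - T \<rho> r *v q)"
        using Tbound by simp
    qed
    have "((\<lambda>\<rho>. exp (L * \<bar>t - \<rho>\<bar>) * norm (q - T \<rho> r *v q)) \<longlongrightarrow> exp (L * \<bar>t - r\<bar>) * norm (q - q)) (at r)"
      by (intro tendsto_intros c)
    then show "((\<lambda>\<rho>. exp (L * \<bar>t - \<rho>\<bar>) * norm (q - T \<rho> r *v q)) \<longlongrightarrow> 0) (at r)" by simp
  qed
  then show ?thesis by (rule LIM_zero_cancel)
qed

lemma TD:
  assumes w: "(w has_vector_derivative (A r *v w r + q)) (at r)"
  shows "((\<lambda>\<rho>. T t \<rho> *v w \<rho>) has_vector_derivative T t r *v q) (at r)"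
proof -
  define D where "D \<rho> = w \<rho> - T \<rho> r *v w r" for \<rho>
  have Dd: "(D has_vector_derivative q) (at r)"
    unfolding D_def using has_vector_derivative_diff[OF w Tv_deriv[where s=r and v="w r" and t=r]]
    by (simp add: T_init)
  have D0: "D r = 0" by (simp add: D_def T_init)
  have split: "T t \<rho> *v w \<rho> = T t r *v w r + T t \<rho> *v D \<rho>" for \<rho>
    by (simp add: D_def matrix_vector_mult_diff_distrib matrix_vector_mul_assoc cocycle)
  define E where "E y = (D y - D r - (y - r) *\<^sub>R q) /\<^sub>R norm (y - r)" for y
  have E0: "(E \<longlongrightarrow> 0) (at r)"
    using Dd unfolding has_vector_derivative_def has_derivative_at_within E_def by simp
  have "((\<lambda>\<rho>. T t \<rho> *v D \<rho>) has_vector_derivative T t r *v q) (at r)"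
    unfolding has_vector_derivative_def has_derivative_at_within
  proof (intro conjI)
    show "bounded_linear (\<lambda>x. x *\<^sub>R (T t r *v q))" by (rule bounded_linear_scaleR_left)
    show "((\<lambda>y. (T t y *v D y - T t r *v D r - (y - r) *\<^sub>R (T t r *v q)) /\<^sub>R norm (y - r)) \<longlongrightarrow> 0) (at r)"
    proof (rule Lim_null_comparison)
      show "\<forall>\<^sub>F y in at r. norm ((T t y *v D y - T t r *v D r - (y - r) *\<^sub>R (T t r *v q)) /\<^sub>R norm (y - r))
          \<le> exp (L * \<bar>t - y\<bar>) * norm (E y) + norm (T t y *v q - T t r *v q)"
      proof (rule always_eventually, rule allI)
        fix y
        show "norm ((T t y *v D y - T t r *v D r - (y - r) *\<^sub>R (T t r *v q)) /\<^sub>R norm (y - r))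
          \<le> exp (L * \<bar>t - y\<bar>) * norm (E y) + norm (T t y *v q - T t r *v q)"
        proof (cases "y = r")
          case True then show ?thesis by simp
        next
          case False
          then have ny: "norm (y - r) > 0" by simp
          have eq: "(T t y *v D y - T t r *v D r - (y - r) *\<^sub>R (T t r *v q)) /\<^sub>R norm (y - r)
             = T t y *v E y + ((y - r) / norm (y - r)) *\<^sub>R (T t y *v q - T t r *v q)"
            unfolding E_def D0 by (rule eq_aux)
          have "norm (T t y *v E y + ((y - r) / norm (y - r)) *\<^sub>R (T t y *v q - T t r *v q))
              \<le> norm (T t y *v E y) + norm (((y - r) / norm (y - r)) *\<^sub>R (T t y *v q - T t r *v q))"
            by (rule norm_triangle_ineq)
          also have "norm (((y - r) / norm (y - r)) *\<^sub>R (T t y *v q - T t r *v q)) = norm (T t y *v q - T t r *v q)"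
            using ny by simp
          finally show ?thesis using Tbound[of t y "E y"] eq by simp
        qed
      qed
      have "((\<lambda>y. exp (L * \<bar>t - y\<bar>) * norm (E y) + norm (T t y *v q - T t r *v q)) \<longlongrightarrow>
          exp (L * \<bar>t - r\<bar>) * norm (0::real^'n) + norm (T t r *v q - T t r *v q)) (at r)"
        by (intro tendsto_intros E0 Tcont2)
      then show "((\<lambda>y. exp (L * \<bar>t - y\<bar>) * norm (E y) + norm (T t y *v q - T t r *v q)) \<longlongrightarrow> 0) (at r)"
        by simp
    qed
  qed
  then have "((\<lambda>\<rho>. T t r *v w r + T t \<rho> *v D \<rho>) has_vector_derivative 0 + T t r *v q) (at r)"
    by (rule has_vector_derivative_add[OF has_vector_derivative_const])
  moreover have "(\<lambda>\<rho>. T t r *v w r + T t \<rho> *v D \<rho>) = (\<lambda>\<rho>. T t \<rho> *v w \<rho>)"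
    by (rule ext) (rule split[symmetric])
  ultimately show ?thesis by simp
qed

end


lemma int_bound:
  fixes u :: "real \<Rightarrow> real^'n"
  assumes ab: "a \<le> b" and ud: "\<And>\<rho>. (u has_vector_derivative u' \<rho>) (at \<rho>)"
    and Pd: "\<And>\<rho>. (\<Phi> has_real_derivative \<phi> \<rho>) (at \<rho>)"
    and le: "\<And>\<rho>. a \<le> \<rho> \<Longrightarrow> \<rho> \<le> b \<Longrightarrow> norm (u' \<rho>) \<le> \<phi> \<rho>"
  shows "norm (u b - u a) \<le> \<Phi> b - \<Phi> a"
proof -
  have i1: "(u' has_integral (u b - u a)) {a..b}"
    by (rule fundamental_theorem_of_calculus[OF ab]) (rule has_vector_derivative_at_within[OF ud])
  have i2: "(\<phi> has_integral (\<Phi> b - \<Phi> a)) {a..b}"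
    by (rule fundamental_theorem_of_calculus[OF ab])
      (rule has_vector_derivative_at_within, use Pd has_real_derivative_iff_has_vector_derivative in blast)
  have "norm (integral {a..b} u') \<le> integral {a..b} \<phi>"
    by (rule integral_norm_bound_integral[OF has_integral_integrable[OF i1] has_integral_integrable[OF i2]])
      (use le in auto)
  then show ?thesis using integral_unique[OF i1] integral_unique[OF i2] by simp
qed

lemma pa:
  fixes a b :: real
  assumes "a > 0" "b > 0"
  shows "(a / b) powr (\<beta> - 1) * (d / b) = (a / b) powr \<beta> * (d / a)"
proof -
  have "(a / b) powr (\<beta> - 1) = (a / b) powr \<beta> / (a / b)"
    using assms by (simp add: powr_diff)
  then show ?thesis using assms by (simp add: field_simps)
qed

lemma pb:
  fixes a b :: real
  assumes "a > 0" "b > 0"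
  shows "(b / a) powr (- x) = (a / b) powr x"
  using assms by (simp add: powr_minus_divide powr_divide)

lemma phi_deriv:
  fixes \<mu> :: "real \<Rightarrow> real"
  assumes "(\<mu> has_real_derivative d) (at \<rho>)" "\<mu> \<rho> > 0" "c > 0"
  shows "((\<lambda>\<rho>. (\<mu> \<rho> / c) powr \<beta>) has_real_derivative \<beta> * (\<mu> \<rho> / c) powr (\<beta> - 1) * (d / c)) (at \<rho>)"
proof -
  have "((\<lambda>\<rho>. \<mu> \<rho> / c) has_real_derivative d / c) (at \<rho>)"
    using assms(1) by (rule DERIV_cdivide)
  moreover have "((\<lambda>z. z powr \<beta>) has_real_derivative \<beta> * (\<mu> \<rho> / c) powr (\<beta> - 1)) (at (\<mu> \<rho> / c))"
    using assms by (intro has_real_derivative_powr) simp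
  ultimately show ?thesis using DERIV_chain2[of "\<lambda>z. z powr \<beta>" _ "\<lambda>\<rho>. \<mu> \<rho> / c" \<rho> "d / c" UNIV] by simp
qed

theorem lemma3p4:
  fixes A :: "real \<Rightarrow> real^'n^'n"
    and T :: "real \<Rightarrow> real \<Rightarrow> real^'n^'n"
    and P :: "real \<Rightarrow> real^'n^'n"
    and \<mu> :: "real \<Rightarrow> real"
    and f :: "real \<Rightarrow> real^'n \<Rightarrow> real^'n"
    and x :: "real \<Rightarrow> real^'n"
    and K \<alpha> \<beta> \<gamma> :: real
  assumes A_cont: "continuous_on UNIV A"
    and A_bdd: "bounded (range A)"
    and T_init: "\<And>s. T s s = mat 1"
    and T_deriv: "\<And>t s. ((\<lambda>t. T t s) has_vector_derivative (A t ** T t s)) (at t)"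
    and mu_pos: "\<And>t. \<mu> t > 0"
    and mu_mono: "mono \<mu>"
    and mu_diff: "\<And>t. \<mu> differentiable (at t)"
    and mu_0: "\<mu> 0 = 1"
    and mu_bot: "(\<mu> \<longlongrightarrow> 0) at_bot"
    and mu_top: "filterlim \<mu> at_top at_top"
    and K_pos: "K > 0" and alpha_pos: "\<alpha> > 0"
    and P_proj: "\<And>s. P s ** P s = P s"
    and P_inv: "\<And>t s. T t s ** P s = P t ** T t s"
    and dich_P: "\<And>t s. t \<ge> s \<Longrightarrow>
       onorm (\<lambda>v. (T t s ** P s) *v v) \<le> K * (\<mu> t / \<mu> s) powr (- \<alpha>)"
    and dich_Q: "\<And>t s. t \<le> s \<Longrightarrow>
       onorm (\<lambda>v. (T t s ** (mat 1 - P s)) *v v) \<le> K * (\<mu> s / \<mu> t) powr (- \<alpha>)"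
    and f_cont: "continuous_on UNIV (\<lambda>(t, y). f t y)"
    and beta_nn: "\<beta> \<ge> 0" and gamma_nn: "\<gamma> \<ge> 0"
    and f_bdd: "\<And>t y. norm (f t y) \<le> \<beta> * deriv \<mu> t * inverse (\<mu> t)"
    and f_lip: "\<And>t y1 y2. norm (f t y1 - f t y2) \<le> \<gamma> * deriv \<mu> t * inverse (\<mu> t) * norm (y1 - y2)"
    and small: "6 * K * \<gamma> / \<alpha> < 1"
    and x_sol: "\<And>t. (x has_vector_derivative (A t *v x t + f t (x t))) (at t)"
  shows "(\<forall>t. ((\<lambda>t. 0 :: real^'n) has_vector_derivative
              (A t *v 0 + f t (x t + 0) - f t (x t))) (at t))
    \<and> (\<forall>Z :: real \<Rightarrow> real^'n.
          (\<forall>t. (Z has_vector_derivative (A t *v Z t + f t (x t + Z t) - f t (x t))) (at t))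
          \<and> bounded (range Z) \<longrightarrow> (\<forall>t. Z t = 0))"
proof -
  obtain B where B: "\<And>t. norm (A t) \<le> B" using A_bdd by (auto simp: bounded_iff)
  define L where "L = real CARD('n) * real CARD('n) * B"
  have L: "norm (A t *v v) \<le> L * norm v" for t v
    using mv_bound[OF B[of t], of v] by (simp add: L_def)
  have B0: "B \<ge> 0" using B[of 0] norm_ge_zero[of "A 0"] by linarith
  have L0: "L \<ge> 0" using B0 by (simp add: L_def)
  interpret linsys A T L
    by unfold_locales (rule L, rule L0, rule T_init, rule T_deriv)
  have dmu: "(\<mu> has_real_derivative deriv \<mu> r) (at r)" for r
    using mu_diff DERIV_deriv_iff_real_differentiable by blast
  have dmu0: "deriv \<mu> r \<ge> 0" for r by (rule mono_deriv_nonneg[OF mu_mono dmu])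
  show ?thesis
  proof (intro conjI allI impI)
    fix t
    show "((\<lambda>t. 0 :: real^'n) has_vector_derivative (A t *v 0 + f t (x t + 0) - f t (x t))) (at t)"
      by simp
  next
    fix Z :: "real \<Rightarrow> real^'n" and t0 :: real
    assume H: "(\<forall>t. (Z has_vector_derivative (A t *v Z t + f t (x t + Z t) - f t (x t))) (at t))
          \<and> bounded (range Z)"
    define g where "g r = f r (x r + Z r) - f r (x r)" for r
    have Zd: "(Z has_vector_derivative (A r *v Z r + g r)) (at r)" for r
      using H by (simp add: g_def add_diff_eq)
    obtain M where M: "\<And>t. norm (Z t) \<le> M" using H by (auto simp: bounded_iff)
    define M0 where "M0 = (SUP t. norm (Z t))"
    have bddZ: "bdd_above (range (\<lambda>t. norm (Z t)))" using M by (intro bdd_aboveI2) auto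
    have ZM0: "norm (Z t) \<le> M0" for t unfolding M0_def by (rule cSUP_upper[OF _ bddZ]) simp
    have M00: "M0 \<ge> 0" using ZM0[of 0] norm_ge_zero[of "Z 0"] by linarith
    have gb: "norm (g r) \<le> \<gamma> * deriv \<mu> r * inverse (\<mu> r) * M0" for r
    proof -
      have "norm (g r) \<le> \<gamma> * deriv \<mu> r * inverse (\<mu> r) * norm (Z r)"
        using f_lip[of r "x r + Z r" "x r"] by (simp add: g_def)
      also have "\<dots> \<le> \<gamma> * deriv \<mu> r * inverse (\<mu> r) * M0"
        by (rule mult_left_mono[OF ZM0]) (use gamma_nn dmu0[of r] mu_pos[of r] in simp)
      finally show ?thesis .
    qed
    define C where "C = K * \<gamma> * M0 / \<alpha>"
    have C0: "C \<ge> 0" using K_pos gamma_nn M00 alpha_pos by (simp add: C_def)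
    have Pbd: "norm (P t *v Z t) \<le> C" for t
    proof -
      define u where "u \<rho> = P t *v (T t \<rho> *v Z \<rho>)" for \<rho>
      have ud: "(u has_vector_derivative (T t \<rho> ** P \<rho>) *v g \<rho>) (at \<rho>)" for \<rho>
        unfolding u_def
        using bounded_linear.has_vector_derivative[OF matrix_vector_mul_bounded_linear[of "P t"] TD[OF Zd, of t]]
        by (simp add: matrix_vector_mul_assoc P_inv)
      define \<Phi> where "\<Phi> \<rho> = C * (\<mu> \<rho> / \<mu> t) powr \<alpha>" for \<rho>
      define \<phi> where "\<phi> \<rho> = C * (\<alpha> * (\<mu> \<rho> / \<mu> t) powr (\<alpha> - 1) * (deriv \<mu> \<rho> / \<mu> t))" for \<rho>
      have \<Phi>d: "(\<Phi> has_real_derivative \<phi> \<rho>) (at \<rho>)" for \<rho>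
        unfolding \<Phi>_def \<phi>_def by (intro DERIV_cmult phi_deriv dmu mu_pos)
      have ineq: "norm ((T t \<rho> ** P \<rho>) *v g \<rho>) \<le> \<phi> \<rho>" if "\<rho> \<le> t" for \<rho>
      proof -
        have "norm ((T t \<rho> ** P \<rho>) *v g \<rho>) \<le> onorm (\<lambda>v. (T t \<rho> ** P \<rho>) *v v) * norm (g \<rho>)"
          using onorm[OF matrix_vector_mul_bounded_linear] by blast
        also have "\<dots> \<le> (K * (\<mu> t / \<mu> \<rho>) powr (- \<alpha>)) * (\<gamma> * deriv \<mu> \<rho> * inverse (\<mu> \<rho>) * M0)"
          by (rule mult_mono[OF dich_P[OF that] gb]) (use K_pos in simp_all)
        also have "\<dots> = (K * \<gamma> * M0) * ((\<mu> \<rho> / \<mu> t) powr \<alpha> * (deriv \<mu> \<rho> / \<mu> \<rho>))"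
          by (simp add: pb[OF mu_pos mu_pos] inverse_eq_divide mult.commute mult.left_commute)
        also have "\<dots> = \<phi> \<rho>"
        proof -
          have "\<phi> \<rho> = (C * \<alpha>) * ((\<mu> \<rho> / \<mu> t) powr (\<alpha> - 1) * (deriv \<mu> \<rho> / \<mu> t))"
            by (simp add: \<phi>_def mult.assoc)
          also have "\<dots> = (K * \<gamma> * M0) * ((\<mu> \<rho> / \<mu> t) powr \<alpha> * (deriv \<mu> \<rho> / \<mu> \<rho>))"
            using alpha_pos by (simp only: pa[OF mu_pos mu_pos]) (simp add: C_def)
          finally show ?thesis by simp
        qed
        finally show ?thesis .
      qed
      have ev: "norm (P t *v Z t) \<le> C + K * (\<mu> s / \<mu> t) powr \<alpha> * M0" if st: "s \<le> t" for s
      proof -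
        have "norm (u t - u s) \<le> \<Phi> t - \<Phi> s"
          by (rule int_bound[OF st ud \<Phi>d ineq]) simp
        also have "\<dots> \<le> C" using C0 by (simp add: \<Phi>_def mu_pos less_eq_real_def[symmetric])
        finally have 1: "norm (u t - u s) \<le> C" .
        have "norm (u s) = norm ((T t s ** P s) *v Z s)"
          by (simp add: u_def matrix_vector_mul_assoc P_inv)
        also have "\<dots> \<le> onorm (\<lambda>v. (T t s ** P s) *v v) * norm (Z s)"
          using onorm[OF matrix_vector_mul_bounded_linear] by blast
        also have "\<dots> \<le> (K * (\<mu> t / \<mu> s) powr (- \<alpha>)) * M0"
          by (rule mult_mono[OF dich_P[OF st] ZM0]) (use K_pos in simp_all)
        also have "\<dots> = K * (\<mu> s / \<mu> t) powr \<alpha> * M0"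
          by (simp add: pb[OF mu_pos mu_pos])
        finally have 2: "norm (u s) \<le> K * (\<mu> s / \<mu> t) powr \<alpha> * M0" .
        have "u t = P t *v Z t" by (simp add: u_def T_init)
        then have "norm (P t *v Z t) \<le> norm (u t - u s) + norm (u s)"
          using norm_triangle_ineq[of "u t - u s" "u s"] by simp
        then show ?thesis using 1 2 by linarith
      qed
      have lim: "((\<lambda>s. C + K * (\<mu> s / \<mu> t) powr \<alpha> * M0) \<longlongrightarrow> C + K * 0 * M0) at_bot"
      proof (intro tendsto_intros)
        show "((\<lambda>s. (\<mu> s / \<mu> t) powr \<alpha>) \<longlongrightarrow> 0) at_bot"
        proof (rule tendsto_zero_powrI)
          show "((\<lambda>s. \<mu> s / \<mu> t) \<longlongrightarrow> 0) at_bot"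
            using tendsto_divide[OF mu_bot tendsto_const[of "\<mu> t"]] mu_pos[of t] by simp
          show "((\<lambda>s. \<alpha>) \<longlongrightarrow> \<alpha>) at_bot" by simp
          show "\<forall>\<^sub>F s in at_bot. 0 \<le> \<mu> s / \<mu> t"
            using mu_pos by (intro always_eventually) (simp add: less_imp_le)
          show "0 < \<alpha>" by (rule alpha_pos)
        qed
      qed
      have "\<forall>\<^sub>F s in at_bot. norm (P t *v Z t) \<le> C + K * (\<mu> s / \<mu> t) powr \<alpha> * M0"
        using eventually_le_at_bot[of t] by eventually_elim (rule ev)
      from tendsto_le[OF trivial_limit_at_bot_linorder lim tendsto_const this]
      show ?thesis by simp
    qed
    have Qbd: "norm ((mat 1 - P t) *v Z t) \<le> C" for t
    proof -
      define u where "u \<rho> = (mat 1 - P t) *v (T t \<rho> *v Z \<rho>)" for \<rho>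
      have key: "(mat 1 - P t) *v (T t \<rho> *v v) = (T t \<rho> ** (mat 1 - P \<rho>)) *v v" for \<rho> v
      proof -
        have "(T t \<rho> ** (mat 1 - P \<rho>)) *v v = T t \<rho> *v v - (T t \<rho> ** P \<rho>) *v v"
          by (simp add: matrix_vector_mul_assoc[symmetric] matrix_vector_mult_diff_rdistrib matrix_vector_mult_diff_distrib)
        then show ?thesis
          by (simp only: matrix_vector_mult_diff_rdistrib matrix_vector_mul_lid) (simp add: matrix_vector_mul_assoc P_inv)
      qed
      have ud: "(u has_vector_derivative (T t \<rho> ** (mat 1 - P \<rho>)) *v g \<rho>) (at \<rho>)" for \<rho>
        unfolding u_def
        using bounded_linear.has_vector_derivative[OF matrix_vector_mul_bounded_linear[of "mat 1 - P t"] TD[OF Zd, of t]]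
        by (simp add: key)
      define \<Phi> where "\<Phi> \<rho> = - C * (\<mu> \<rho> / \<mu> t) powr (- \<alpha>)" for \<rho>
      define \<phi> where "\<phi> \<rho> = - C * (- \<alpha> * (\<mu> \<rho> / \<mu> t) powr (- \<alpha> - 1) * (deriv \<mu> \<rho> / \<mu> t))" for \<rho>
      have \<Phi>d: "(\<Phi> has_real_derivative \<phi> \<rho>) (at \<rho>)" for \<rho>
        unfolding \<Phi>_def \<phi>_def by (intro DERIV_cmult phi_deriv dmu mu_pos)
      have ineq: "norm ((T t \<rho> ** (mat 1 - P \<rho>)) *v g \<rho>) \<le> \<phi> \<rho>" if "t \<le> \<rho>" for \<rho>
      proof -
        have "norm ((T t \<rho> ** (mat 1 - P \<rho>)) *v g \<rho>) \<le> onorm (\<lambda>v. (T t \<rho> ** (mat 1 - P \<rho>)) *v v) * norm (g \<rho>)"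
          using onorm[OF matrix_vector_mul_bounded_linear] by blast
        also have "\<dots> \<le> (K * (\<mu> \<rho> / \<mu> t) powr (- \<alpha>)) * (\<gamma> * deriv \<mu> \<rho> * inverse (\<mu> \<rho>) * M0)"
          by (rule mult_mono[OF dich_Q[OF that] gb]) (use K_pos in simp_all)
        also have "\<dots> = (K * \<gamma> * M0) * ((\<mu> \<rho> / \<mu> t) powr (- \<alpha>) * (deriv \<mu> \<rho> / \<mu> \<rho>))"
          by (simp add: inverse_eq_divide mult.commute mult.left_commute)
        also have "\<dots> = \<phi> \<rho>"
        proof -
          have "\<phi> \<rho> = (C * \<alpha>) * ((\<mu> \<rho> / \<mu> t) powr (- \<alpha> - 1) * (deriv \<mu> \<rho> / \<mu> t))"
            by (simp add: \<phi>_def mult.assoc)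
          also have "\<dots> = (K * \<gamma> * M0) * ((\<mu> \<rho> / \<mu> t) powr (- \<alpha>) * (deriv \<mu> \<rho> / \<mu> \<rho>))"
            using alpha_pos by (simp only: pa[OF mu_pos mu_pos]) (simp add: C_def)
          finally show ?thesis by simp
        qed
        finally show ?thesis .
      qed
      have ev: "norm ((mat 1 - P t) *v Z t) \<le> C + K * (\<mu> t / \<mu> s) powr \<alpha> * M0" if st: "t \<le> s" for s
      proof -
        have "norm (u s - u t) \<le> \<Phi> s - \<Phi> t"
          by (rule int_bound[OF st ud \<Phi>d ineq]) simp
        also have "\<dots> \<le> C" using C0 mu_pos[of s] mu_pos[of t] by (simp add: \<Phi>_def)
        finally have 1: "norm (u s - u t) \<le> C" .
        have "norm (u s) = norm ((T t s ** (mat 1 - P s)) *v Z s)"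
          by (simp add: u_def key)
        also have "\<dots> \<le> onorm (\<lambda>v. (T t s ** (mat 1 - P s)) *v v) * norm (Z s)"
          using onorm[OF matrix_vector_mul_bounded_linear] by blast
        also have "\<dots> \<le> (K * (\<mu> s / \<mu> t) powr (- \<alpha>)) * M0"
          by (rule mult_mono[OF dich_Q[OF st] ZM0]) (use K_pos in simp_all)
        also have "\<dots> = K * (\<mu> t / \<mu> s) powr \<alpha> * M0"
          by (simp add: pb[OF mu_pos mu_pos])
        finally have 2: "norm (u s) \<le> K * (\<mu> t / \<mu> s) powr \<alpha> * M0" .
        have "u t = (mat 1 - P t) *v Z t" by (simp add: u_def T_init)
        then have "norm ((mat 1 - P t) *v Z t) \<le> norm (u s - u t) + norm (u s)"
          using norm_triangle_ineq4[of "u s" "u s - u t"] by simp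
        then show ?thesis using 1 2 by linarith
      qed
      have lim: "((\<lambda>s. C + K * (\<mu> t / \<mu> s) powr \<alpha> * M0) \<longlongrightarrow> C + K * 0 * M0) at_top"
      proof (intro tendsto_intros)
        show "((\<lambda>s. (\<mu> t / \<mu> s) powr \<alpha>) \<longlongrightarrow> 0) at_top"
        proof (rule tendsto_zero_powrI)
          show "((\<lambda>s. \<mu> t / \<mu> s) \<longlongrightarrow> 0) at_top"
            by (rule tendsto_divide_0[OF tendsto_const filterlim_at_top_imp_at_infinity[OF mu_top]])
          show "((\<lambda>s. \<alpha>) \<longlongrightarrow> \<alpha>) at_top" by simp
          show "\<forall>\<^sub>F s in at_top. 0 \<le> \<mu> t / \<mu> s"
            using mu_pos by (intro always_eventually) (simp add: less_imp_le)
          show "0 < \<alpha>" by (rule alpha_pos)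
        qed
      qed
      have "\<forall>\<^sub>F s in at_top. norm ((mat 1 - P t) *v Z t) \<le> C + K * (\<mu> t / \<mu> s) powr \<alpha> * M0"
        using eventually_ge_at_top[of t] by eventually_elim (rule ev)
      from tendsto_le[OF trivial_limit_at_top_linorder lim tendsto_const this]
      show ?thesis by simp
    qed
    have Zb: "norm (Z t) \<le> 2 * C" for t
    proof -
      have "Z t = P t *v Z t + (mat 1 - P t) *v Z t"
        by (simp add: matrix_vector_mult_diff_rdistrib)
      then have "norm (Z t) \<le> norm (P t *v Z t) + norm ((mat 1 - P t) *v Z t)"
        by (metis norm_triangle_ineq)
      then show ?thesis using Pbd[of t] Qbd[of t] by linarith
    qed
    have "M0 \<le> 2 * C" unfolding M0_def by (rule cSUP_least) (simp_all add: Zb)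
    moreover have "2 * C = (2 * K * \<gamma> / \<alpha>) * M0" by (simp add: C_def)
    moreover have "2 * K * \<gamma> / \<alpha> < 1" using small K_pos gamma_nn alpha_pos by (simp add: divide_simps)
    ultimately have "M0 \<le> 0" using M00
      by (metis le_less_trans less_le_not_le mult_less_cancel_right2 not_le_imp_less)
    then have "norm (Z t0) \<le> 0" using ZM0[of t0] by linarith
    then show "Z t0 = 0" by simp
  qed
qed

end
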